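(* Fix $n\ge1$ and all parameters other than $\gamma_{\rm P}$, and let $(z^{Q,\star}(\gamma_{\rm P}),z^{S,\star}(\gamma_{\rm P}))$ denote the unique maximiser of $f$. There exists $\overline\gamma_{{\rm P},n}>0$ such that for every $\gamma_{\rm P}\in(0,\overline\gamma_{{\rm P},n})$: $z^{Q,i,i,\star}(\gamma_{\rm P})>0$ for all $i$; $\mathrm{sgn}(z^{S,i,\star}(\gamma_{\rm P}))=-\mathrm{sgn}(\rho_i)$ for every $i$ with $\rho_i\ne0$; and $\mathrm{sgn}(z^{Q,i,j,\star}(\gamma_{\rm P}))=\mathrm{sgn}(\rho_i\rho_j)$ for every $i\ne j$ with $\rho_i\rho_j\ne0$.
   Context: Fix an integer $n\ge1$ and parameters $\sigma>0$, $\gamma_{\rm P}>0$, and for each $i\in\{1,\dots,n\}$: $c_i>0$, $\gamma_i>0$, $\nu_i>0$, $\rho_i\in(-1,1)$. Write $\nu=(\nu_1,\dots,\nu_n)^\top$, $\rho=(\rho_1,\dots,\rho_n)^\top$. The variables are a matrix $z^Q=(z^{Q,i,j})_{i,j}\in\mathbb{R}^{n\times n}$ ($i$ row, $j$ column) and a vector $z^S=(z^{S,1},\dots,z^{S,n})^\top\in\mathbb{R}^n$. Define $f:\mathbb{R}^{n\times n}\times\mathbb{R}^n\to\mathbb{R}$ by $$f(z^Q,z^S)=-\frac1n\sum_{i=1}^n\Big(\frac{(z^{Q,i,i})^2}{2c_i}+\frac{\gamma_i}{2}\sum_{j=1}^n\nu_j^2(z^{Q,i,j})^2+\frac{\gamma_i\sigma^2}{2}(z^{S,i})^2+\frac{\gamma_i\sigma}{\sqrt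 n}z^{S,i}\sum_{j=1}^n\rho_j\nu_jz^{Q,i,j}-\frac{z^{Q,i,i}}{c_i}\Big)-\frac{\gamma_{\rm P}}{2n^2}\sum_{i=1}^n\Big(\Big(\nu_i-\nu_i\sum_{j=1}^nz^{Q,j,i}-\frac{\rho_i\sigma}{\sqrt n}\sum_{j=1}^nz^{S,j}\Big)^2+\frac{(1-\rho_i^2)\sigma^2}{n}\Big(\sum_{j=1}^nz^{S,j}\Big)^2\Big).$$ For each $\gamma_{\rm P}>0$, $f$ has a unique global maximiser. *)

theory Defs
  imports "HOL-Analysis.Analysis"
begin

text \<open>Index set {1..n} is rendered as a finite type 'n with CARD('n) = n.
  z^Q is a matrix real^'n^'n with zQ $ i $ j = z^{Q,i,j} (i row, j column).\<close>

definition obj_f ::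
  "real^'n \<Rightarrow> real^'n \<Rightarrow> real^'n \<Rightarrow> real^'n \<Rightarrow> real \<Rightarrow> real
     \<Rightarrow> real^'n^'n \<Rightarrow> real^'n \<Rightarrow> real" where
  "obj_f c gam nu rho sig gP zQ zS =
    (let n = real CARD('n) in
     - (1 / n) * (\<Sum>i\<in>UNIV.
          (zQ $ i $ i)^2 / (2 * c $ i)
        + gam $ i / 2 * (\<Sum>j\<in>UNIV. (nu $ j)^2 * (zQ $ i $ j)^2)
        + gam $ i * sig^2 / 2 * (zS $ i)^2
        + gam $ i * sig / sqrt n * zS $ i * (\<Sum>j\<in>UNIV. rho $ j * nu $ j * zQ $ i $ j)
        - zQ $ i $ i / c $ i)
     - gP / (2 * n^2) * (\<Sum>i\<in>UNIV.
          (nu $ i - nu $ i * (\<Sum>j\<in>UNIV. zQ $ j $ i)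
             - rho $ i * sig / sqrt n * (\<Sum>j\<in>UNIV. zS $ j))^2
        + (1 - (rho $ i)^2) * sig^2 / n * (\<Sum>j\<in>UNIV. zS $ j)^2))"

definition is_global_max ::
  "real^'n \<Rightarrow> real^'n \<Rightarrow> real^'n \<Rightarrow> real^'n \<Rightarrow> real \<Rightarrow> real
     \<Rightarrow> real^'n^'n \<Rightarrow> real^'n \<Rightarrow> bool" where
  "is_global_max c gam nu rho sig gP zQ zS \<longleftrightarrow>
     (\<forall>zQ' zS'. obj_f c gam nu rho sig gP zQ' zS' \<le> obj_f c gam nu rho sig gP zQ zS)"

end

theory Submission
  imports Defs
begin

definition hrow :: "real^'n \<Rightarrow> real^'n \<Rightarrow> real^'n \<Rightarrow> real^'n \<Rightarrow> real \<Rightarrow> 'n \<Rightarrow> real^'n \<Rightarrow> real \<Rightarrow> real" where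
  "hrow c gam nu rho sig i r s =
          (r $ i)^2 / (2 * c $ i)
        + gam $ i / 2 * (\<Sum>j\<in>UNIV. (nu $ j)^2 * (r $ j)^2)
        + gam $ i * sig^2 / 2 * s^2
        + gam $ i * sig / sqrt (real CARD('n)) * s * (\<Sum>j\<in>UNIV. rho $ j * nu $ j * r $ j)
        - r $ i / c $ i"

definition pen :: "real^'n \<Rightarrow> real^'n \<Rightarrow> real \<Rightarrow> real^'n^'n \<Rightarrow> real^'n \<Rightarrow> real" where
  "pen nu rho sig zQ zS = (\<Sum>i\<in>UNIV.
          (nu $ i - nu $ i * (\<Sum>j\<in>UNIV. zQ $ j $ i)
             - rho $ i * sig / sqrt (real CARD('n)) * (\<Sum>j\<in>UNIV. zS $ j))^2
        + (1 - (rho $ i)^2) * sig^2 / real CARD('n) * (\<Sum>j\<in>UNIV. zS $ j)^2)"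

lemma obj_split:
  fixes zQ :: "real^'n^'n" and zS :: "real^'n"
  shows "obj_f c gam nu rho sig gP zQ zS =
     - (1 / real CARD('n)) * (\<Sum>i\<in>UNIV. hrow c gam nu rho sig i (zQ $ i) (zS $ i))
     - gP / (2 * (real CARD('n))^2) * pen nu rho sig zQ zS"
  unfolding obj_f_def hrow_def pen_def Let_def by simp

lemma pen_nonneg:
  fixes zQ :: "real^'n^'n" and zS :: "real^'n" and rho :: "real^'n"
  assumes "\<And>i. -1 < rho $ i \<and> rho $ i < 1"
  shows "pen nu rho sig zQ zS \<ge> 0"
  unfolding pen_def
proof (rule sum_nonneg)
  fix i :: 'n
  have "1 - (rho $ i)^2 \<ge> 0" using assms[of i] by (simp add: abs_square_le_1 abs_le_iff)
  then show "0 \<le> (nu $ i - nu $ i * (\<Sum>j\<in>UNIV. zQ $ j $ i)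
             - rho $ i * sig / sqrt (real CARD('n)) * (\<Sum>j\<in>UNIV. zS $ j))^2
        + (1 - (rho $ i)^2) * sig^2 / real CARD('n) * (\<Sum>j\<in>UNIV. zS $ j)^2"
    by (intro add_nonneg_nonneg) auto
qed

lemma row_ident:
  fixes r r0 :: "real^'n"
  defines "k \<equiv> sqrt (real CARD('n))"
  assumes cpos: "c $ i > 0" and gpos: "gam $ i > 0"
    and F1: "\<And>j. j \<noteq> i \<Longrightarrow> nu $ j * r0 $ j + sig * s0 * rho $ j / k = 0"
    and F2: "sig * s0 + (\<Sum>j\<in>UNIV. rho $ j * nu $ j * r0 $ j) / k = 0"
    and F3: "(r0 $ i - 1) / c $ i + gam $ i * nu $ i * (nu $ i * r0 $ i + sig * s0 * rho $ i / k) = 0"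
  shows "hrow c gam nu rho sig i r s - hrow c gam nu rho sig i r0 s0 =
      (r $ i - r0 $ i)^2 / (2 * c $ i)
    + gam $ i / 2 * (\<Sum>j\<in>UNIV. (nu $ j)^2 * (r $ j - r0 $ j)^2)
    + gam $ i * sig^2 / 2 * (s - s0)^2
    + gam $ i * sig / k * (s - s0) * (\<Sum>j\<in>UNIV. rho $ j * nu $ j * (r $ j - r0 $ j))"
proof -
  define d where "d = (\<lambda>j. r $ j - r0 $ j)"
  define e where "e = s - s0"
  define A where "A = (\<Sum>j\<in>UNIV. (nu $ j)^2 * (r0 $ j)^2)"
  define B where "B = (\<Sum>j\<in>UNIV. (nu $ j)^2 * r0 $ j * d j)"
  define C where "C = (\<Sum>j\<in>UNIV. (nu $ j)^2 * (d j)^2)"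
  define R0 where "R0 = (\<Sum>j\<in>UNIV. rho $ j * nu $ j * r0 $ j)"
  define Rd where "Rd = (\<Sum>j\<in>UNIV. rho $ j * nu $ j * d j)"
  have rr: "r $ j = r0 $ j + d j" for j by (simp add: d_def)
  have ss: "s = s0 + e" by (simp add: e_def)
  have h1: "(\<Sum>j\<in>UNIV. (nu $ j)^2 * (r $ j)^2) = A + 2 * B + C"
  proof -
    have "(\<Sum>j\<in>UNIV. (nu $ j)^2 * (r $ j)^2) =
      (\<Sum>j\<in>UNIV. (nu $ j)^2 * (r0 $ j)^2 + 2 * ((nu $ j)^2 * r0 $ j * d j) + (nu $ j)^2 * (d j)^2)"
      by (rule sum.cong) (auto simp: rr power2_eq_square algebra_simps)
    also have "\<dots> = A + 2 * B + C"
      by (simp add: A_def B_def C_def sum.distrib sum_distrib_left)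
    finally show ?thesis .
  qed
  have h2: "(\<Sum>j\<in>UNIV. rho $ j * nu $ j * r $ j) = R0 + Rd"
    by (simp add: R0_def Rd_def rr algebra_simps sum.distrib)
  have h3: "(\<Sum>j\<in>UNIV. nu $ j * d j * (nu $ j * r0 $ j + sig * s0 * rho $ j / k))
      = nu $ i * d i * (nu $ i * r0 $ i + sig * s0 * rho $ i / k)"
  proof -
    have "(\<Sum>j\<in>UNIV. nu $ j * d j * (nu $ j * r0 $ j + sig * s0 * rho $ j / k))
       = (\<Sum>j\<in>UNIV. if j = i then nu $ i * d i * (nu $ i * r0 $ i + sig * s0 * rho $ i / k) else 0)"
      by (rule sum.cong) (auto simp: F1)
    then show ?thesis by simp
  qed
  have h4: "(\<Sum>j\<in>UNIV. nu $ j * d j * (nu $ j * r0 $ j + sig * s0 * rho $ j / k))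
      = B + sig * s0 / k * Rd"
    by (simp add: B_def Rd_def sum.distrib sum_distrib_left algebra_simps power2_eq_square)
  have key: "B + sig * s0 / k * Rd = - (r0 $ i - 1) * d i / (c $ i * gam $ i)"
  proof -
    have "gam $ i * (nu $ i * (nu $ i * r0 $ i + sig * s0 * rho $ i / k)) = - (r0 $ i - 1) / c $ i"
      using F3 by (simp add: algebra_simps diff_divide_distrib)
    note X = this
    have "gam $ i * (B + sig * s0 / k * Rd) = d i * (gam $ i * (nu $ i * (nu $ i * r0 $ i + sig * s0 * rho $ i / k)))"
    proof -
      have "B + sig * s0 / k * Rd = nu $ i * d i * (nu $ i * r0 $ i + sig * s0 * rho $ i / k)"
        using h3 h4 by simp
      then show ?thesis by (simp only: mult_ac)
    qed
    then have "gam $ i * (B + sig * s0 / k * Rd) = - (r0 $ i - 1) / c $ i * d i"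
      using X by simp
    then show ?thesis using cpos gpos by (simp add: field_simps)
  qed
  have F2': "sig * s0 + R0 / k = 0" using F2 by (simp add: R0_def)
  have kpos: "k > 0" unfolding k_def by simp
  have Be: "B = - (r0 $ i - 1) * d i / (c $ i * gam $ i) - sig * s0 / k * Rd" using key by simp
  have R0e: "R0 = - sig * s0 * k" using F2' kpos by (simp add: field_simps)
  have C': "(\<Sum>j\<in>UNIV. (nu $ j)^2 * (r $ j - r0 $ j)^2) = C" by (simp add: C_def d_def)
  have Rd': "(\<Sum>j\<in>UNIV. rho $ j * nu $ j * (r $ j - r0 $ j)) = Rd" by (simp add: Rd_def d_def)
  have A': "(\<Sum>j\<in>UNIV. (nu $ j)^2 * (r0 $ j)^2) = A" by (simp add: A_def)
  have R0': "(\<Sum>j\<in>UNIV. rho $ j * nu $ j * r0 $ j) = R0" by (simp add: R0_def)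
  show ?thesis
    unfolding hrow_def h1 h2 C' Rd' A' R0' k_def[symmetric] Be R0e
    unfolding rr[of i] ss
    using cpos gpos kpos
    apply (simp add: field_simps power2_eq_square)
    done
qed

lemma term_nonneg:
  fixes a t p eps :: real
  assumes "\<bar>p\<bar> \<le> 1 - eps"
  shows "0 \<le> (1 - eps) * a^2 + 2 * t * p * a + (1 - eps) * t^2"
proof -
  have e0: "0 \<le> 1 - eps" using assms by linarith
  have "- (2 * t * p * a) \<le> \<bar>2 * t * p * a\<bar>" by linarith
  also have "\<bar>2 * t * p * a\<bar> = \<bar>p\<bar> * (2 * \<bar>a\<bar> * \<bar>t\<bar>)" by (simp add: abs_mult)
  also have "\<dots> \<le> (1 - eps) * (2 * \<bar>a\<bar> * \<bar>t\<bar>)" using assms by (intro mult_right_mono) auto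
  also have "\<dots> \<le> (1 - eps) * (a^2 + t^2)"
  proof (rule mult_left_mono[OF _ e0])
    have "0 \<le> (\<bar>a\<bar> - \<bar>t\<bar>)^2" by simp
    then show "2 * \<bar>a\<bar> * \<bar>t\<bar> \<le> a^2 + t^2" by (simp add: power2_eq_square algebra_simps)
  qed
  finally show ?thesis by (simp add: algebra_simps)
qed

lemma quad_lb:
  fixes d :: "'n::finite \<Rightarrow> real"
  defines "k \<equiv> sqrt (real CARD('n))"
  assumes cpos: "c > 0" and gpos: "g > 0" and eps: "\<And>j. \<bar>rho $ j\<bar> \<le> 1 - eps"
  shows "g * eps / 2 * ((\<Sum>j\<in>UNIV. (nu $ j)^2 * (d j)^2) + sig^2 * e^2) \<le>
      x^2 / (2 * c)
    + g / 2 * (\<Sum>j\<in>UNIV. (nu $ j)^2 * (d j)^2)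
    + g * sig^2 / 2 * e^2
    + g * sig / k * e * (\<Sum>j\<in>UNIV. rho $ j * nu $ j * d j)"
proof -
  define N where "N = real CARD('n)"
  have Npos: "N > 0" by (simp add: N_def)
  have kk: "k^2 = N" by (simp add: k_def N_def)
  have kpos: "k > 0" by (simp add: k_def)
  define t where "t = sig * e / k"
  have "0 \<le> (\<Sum>j\<in>UNIV. (1 - eps) * (nu $ j * d j)^2 + 2 * t * rho $ j * (nu $ j * d j) + (1 - eps) * t^2)"
    by (intro sum_nonneg term_nonneg eps)
  also have "\<dots> = (1 - eps) * (\<Sum>j\<in>UNIV. (nu $ j)^2 * (d j)^2)
       + 2 * t * (\<Sum>j\<in>UNIV. rho $ j * nu $ j * d j) + N * (1 - eps) * t^2"
  proof -
    have "(\<Sum>j\<in>UNIV. (1 - eps) * (nu $ j * d j)^2 + 2 * t * rho $ j * (nu $ j * d j) + (1 - eps) * t^2)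
      = (\<Sum>j\<in>UNIV. (1 - eps) * (nu $ j * d j)^2) + (\<Sum>j\<in>UNIV. 2 * t * rho $ j * (nu $ j * d j))
        + (\<Sum>j::'n\<in>UNIV. (1 - eps) * t^2)" by (simp add: sum.distrib)
    moreover have "(\<Sum>j\<in>UNIV. (1 - eps) * (nu $ j * d j)^2) = (1 - eps) * (\<Sum>j\<in>UNIV. (nu $ j)^2 * (d j)^2)"
      by (simp add: sum_distrib_left power_mult_distrib)
    moreover have "(\<Sum>j\<in>UNIV. 2 * t * rho $ j * (nu $ j * d j)) = 2 * t * (\<Sum>j\<in>UNIV. rho $ j * nu $ j * d j)"
      by (simp add: sum_distrib_left mult.assoc)
    moreover have "(\<Sum>j::'n\<in>UNIV. (1 - eps) * t^2) = N * (1 - eps) * t^2" by (simp add: N_def)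
    ultimately show ?thesis by simp
  qed
  also have "N * (1 - eps) * t^2 = (1 - eps) * sig^2 * e^2"
    using kk kpos Npos by (simp add: t_def power_divide power_mult_distrib)
  finally have H: "0 \<le> (1 - eps) * (\<Sum>j\<in>UNIV. (nu $ j)^2 * (d j)^2)
       + 2 * (sig * e / k) * (\<Sum>j\<in>UNIV. rho $ j * nu $ j * d j) + (1 - eps) * sig^2 * e^2"
    by (simp add: t_def)
  have "0 \<le> g / 2 * ((1 - eps) * (\<Sum>j\<in>UNIV. (nu $ j)^2 * (d j)^2)
       + 2 * (sig * e / k) * (\<Sum>j\<in>UNIV. rho $ j * nu $ j * d j) + (1 - eps) * sig^2 * e^2)"
    using H gpos by simp
  moreover have "0 \<le> x^2 / (2 * c)" using cpos by simp
  ultimately show ?thesis by (simp add: algebra_simps)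
qed

definition SS :: "real^'n \<Rightarrow> real" where "SS rho = (\<Sum>j\<in>UNIV. (rho $ j)^2)"
definition MM :: "real^'n \<Rightarrow> 'n \<Rightarrow> real" where "MM rho i = real CARD('n) - SS rho + (rho $ i)^2"
definition qq :: "real^'n \<Rightarrow> real^'n \<Rightarrow> real^'n \<Rightarrow> real^'n \<Rightarrow> 'n \<Rightarrow> real" where
  "qq c gam nu rho i = MM rho i / (MM rho i + c $ i * gam $ i * (nu $ i)^2 * (real CARD('n) - SS rho))"
definition zQ0 :: "real^'n \<Rightarrow> real^'n \<Rightarrow> real^'n \<Rightarrow> real^'n \<Rightarrow> real^'n^'n" where
  "zQ0 c gam nu rho = (\<chi> i j. if j = i then qq c gam nu rho i
      else rho $ i * rho $ j * nu $ i * qq c gam nu rho i / (MM rho i * nu $ j))"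
definition zS0 :: "real^'n \<Rightarrow> real^'n \<Rightarrow> real^'n \<Rightarrow> real^'n \<Rightarrow> real \<Rightarrow> real^'n" where
  "zS0 c gam nu rho sig = (\<chi> i. - rho $ i * nu $ i * qq c gam nu rho i * sqrt (real CARD('n)) / (sig * MM rho i))"

lemma SS_lt:
  fixes rho :: "real^'n"
  assumes "\<And>i. -1 < rho $ i \<and> rho $ i < 1"
  shows "SS rho < real CARD('n)"
proof -
  have "(\<Sum>j\<in>UNIV. (rho $ j)^2) < (\<Sum>j::'n\<in>UNIV. 1)"
  proof (rule sum_strict_mono)
    fix j :: 'n
    have "\<bar>rho $ j\<bar> < 1" using assms[of j] by auto
    then show "(rho $ j)^2 < 1" by (simp add: abs_square_less_1)
  qed auto
  then show ?thesis by (simp add: SS_def)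
qed

lemma MM_pos:
  fixes rho :: "real^'n"
  assumes "\<And>i. -1 < rho $ i \<and> rho $ i < 1"
  shows "MM rho i > 0"
  using SS_lt[OF assms] unfolding MM_def by (smt (verit) zero_le_power2)

lemma qq_pos:
  fixes rho :: "real^'n"
  assumes "\<And>i. -1 < rho $ i \<and> rho $ i < 1" "c $ i > 0" "gam $ i > 0"
  shows "qq c gam nu rho i > 0"
proof -
  have "MM rho i > 0" by (rule MM_pos[OF assms(1)])
  moreover have "c $ i * gam $ i * (nu $ i)^2 * (real CARD('n) - SS rho) \<ge> 0"
    using SS_lt[OF assms(1)] assms(2,3) by simp
  ultimately show ?thesis unfolding qq_def by simp
qed

lemma sum_if_eq:
  fixes f :: "'n::finite \<Rightarrow> real"
  shows "(\<Sum>j\<in>UNIV. if j = i then X else f j) = X - f i + sum f UNIV"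
proof -
  have "(\<Sum>j\<in>UNIV. if j = i then X else f j) = (\<Sum>j\<in>UNIV. f j + (if j = i then X - f i else 0))"
    by (rule sum.cong) auto
  also have "\<dots> = sum f UNIV + (X - f i)" by (simp add: sum.distrib)
  finally show ?thesis by simp
qed

lemma foc_aux:
  fixes M c a T :: real
  assumes "M > 0" "c > 0" "M + c * a * T > 0"
  shows "(M / (M + c * a * T) - 1) / c + a * (M / (M + c * a * T)) * T / M = 0"
proof -
  have "M / (M + c * a * T) - 1 = - (c * a * T) / (M + c * a * T)"
    using assms by (simp add: field_simps)
  moreover have "a * (M / (M + c * a * T)) * T / M = a * T / (M + c * a * T)"
    using assms by simp
  ultimately show ?thesis using assms by (simp add: divide_simps)
qed

lemma foc:
  fixes c gam nu rho :: "real^'n" and sig :: real and i :: 'n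
  defines "k \<equiv> sqrt (real CARD('n))"
  assumes sig: "sig > 0"
    and cpos: "\<And>i. c $ i > 0" and gpos: "\<And>i. gam $ i > 0" and nupos: "\<And>i. nu $ i > 0"
    and rho: "\<And>i. -1 < rho $ i \<and> rho $ i < 1"
  defines "r0 \<equiv> zQ0 c gam nu rho $ i" and "s0 \<equiv> zS0 c gam nu rho sig $ i"
  shows "\<And>j. j \<noteq> i \<Longrightarrow> nu $ j * r0 $ j + sig * s0 * rho $ j / k = 0"
    and "sig * s0 + (\<Sum>j\<in>UNIV. rho $ j * nu $ j * r0 $ j) / k = 0"
    and "(r0 $ i - 1) / c $ i + gam $ i * nu $ i * (nu $ i * r0 $ i + sig * s0 * rho $ i / k) = 0"
proof -
  define N where "N = real CARD('n)"
  define M where "M = MM rho i"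
  define q where "q = qq c gam nu rho i"
  have Mpos: "M > 0" using MM_pos[OF rho] by (simp add: M_def)
  have kpos: "k > 0" by (simp add: k_def)
  have kk: "k * k = N" by (simp add: k_def N_def)
  have r0j: "r0 $ j = (if j = i then q else rho $ i * rho $ j * nu $ i * q / (M * nu $ j))" for j
    by (simp add: r0_def zQ0_def q_def M_def)
  have s0e: "s0 = - rho $ i * nu $ i * q * k / (sig * M)"
    by (simp add: s0_def zS0_def q_def M_def k_def)
  show "\<And>j. j \<noteq> i \<Longrightarrow> nu $ j * r0 $ j + sig * s0 * rho $ j / k = 0"
  proof -
    fix j assume "j \<noteq> i"
    then show "nu $ j * r0 $ j + sig * s0 * rho $ j / k = 0"
      using nupos[of j] Mpos kpos sig by (simp add: r0j s0e field_simps)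
  qed
  have "(\<Sum>j\<in>UNIV. rho $ j * nu $ j * r0 $ j) =
      (\<Sum>j\<in>UNIV. if j = i then rho $ i * nu $ i * q else rho $ i * nu $ i * q / M * (rho $ j)^2)"
    by (rule sum.cong) (use nupos in \<open>auto simp: r0j field_simps power2_eq_square less_imp_neq[symmetric]\<close>)
  also have "\<dots> = rho $ i * nu $ i * q - rho $ i * nu $ i * q / M * (rho $ i)^2
        + rho $ i * nu $ i * q / M * SS rho"
    by (simp add: sum_if_eq SS_def sum_distrib_left)
  also have "\<dots> = rho $ i * nu $ i * q * (M - (rho $ i)^2 + SS rho) / M"
    using Mpos by (simp add: field_simps)
  also have "M - (rho $ i)^2 + SS rho = N" by (simp add: M_def MM_def N_def)
  finally have R0: "(\<Sum>j\<in>UNIV. rho $ j * nu $ j * r0 $ j) = rho $ i * nu $ i * q * N / M" .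
  show "sig * s0 + (\<Sum>j\<in>UNIV. rho $ j * nu $ j * r0 $ j) / k = 0"
    unfolding R0 s0e using sig Mpos kpos kk[symmetric] by (simp add: field_simps)
  have Dpos: "M + c $ i * gam $ i * (nu $ i)^2 * (N - SS rho) > 0"
    using Mpos SS_lt[OF rho] cpos[of i] gpos[of i] by (simp add: N_def add_pos_nonneg)
  have qe: "q = M / (M + c $ i * gam $ i * (nu $ i)^2 * (N - SS rho))"
    by (simp add: q_def qq_def M_def N_def)
  have MN: "M - (rho $ i)^2 = N - SS rho" by (simp add: M_def MM_def N_def)
  have "(r0 $ i - 1) / c $ i + gam $ i * nu $ i * (nu $ i * r0 $ i + sig * s0 * rho $ i / k)
     = (q - 1) / c $ i + gam $ i * (nu $ i)^2 * q * (M - (rho $ i)^2) / M"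
    using sig Mpos kpos cpos[of i] by (simp add: r0j s0e field_simps power2_eq_square)
  also have "\<dots> = 0"
    unfolding MN qe using foc_aux[OF Mpos cpos[of i], of "gam $ i * (nu $ i)^2" "N - SS rho"] Dpos
    by (simp add: mult.assoc)
  finally show "(r0 $ i - 1) / c $ i + gam $ i * nu $ i * (nu $ i * r0 $ i + sig * s0 * rho $ i / k) = 0" .
qed

lemma sgn_close:
  fixes y y0 :: real
  assumes "(y - y0)^2 < y0^2"
  shows "sgn y = sgn y0"
proof -
  have "y * y < 2 * (y * y0)" using assms by (simp add: power2_eq_square algebra_simps)
  moreover have "0 \<le> y * y" by simp
  ultimately have "y * y0 > 0" by linarith
  then show ?thesis by (auto simp: zero_less_mult_iff sgn_if)
qed

lemma devbound:
  fixes c gam nu rho :: "real^'n" and sig :: real and zQ :: "real^'n^'n" and zS :: "real^'n"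
  assumes sig: "sig > 0"
    and cpos: "\<And>i. c $ i > 0" and gpos: "\<And>i. gam $ i > 0" and nupos: "\<And>i. nu $ i > 0"
    and rho: "\<And>i. -1 < rho $ i \<and> rho $ i < 1"
    and eps: "\<And>j. \<bar>rho $ j\<bar> \<le> 1 - eps" and epos: "eps > 0"
    and gP: "gP > 0"
    and mx: "is_global_max c gam nu rho sig gP zQ zS"
  shows "gam $ i * eps / 2 * ((nu $ j)^2 * (zQ $ i $ j - zQ0 c gam nu rho $ i $ j)^2)
           \<le> gP * pen nu rho sig (zQ0 c gam nu rho) (zS0 c gam nu rho sig) / (2 * real CARD('n))"
    and "gam $ i * eps / 2 * (sig^2 * (zS $ i - zS0 c gam nu rho sig $ i)^2)
           \<le> gP * pen nu rho sig (zQ0 c gam nu rho) (zS0 c gam nu rho sig) / (2 * real CARD('n))"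
proof -
  define Q0 where "Q0 = zQ0 c gam nu rho"
  define S0 where "S0 = zS0 c gam nu rho sig"
  define N where "N = real CARD('n)"
  define h where "h = (\<lambda>i. hrow c gam nu rho sig i (zQ $ i) (zS $ i) - hrow c gam nu rho sig i (Q0 $ i) (S0 $ i))"
  define lb where "lb = (\<lambda>i. gam $ i * eps / 2 * ((\<Sum>j\<in>UNIV. (nu $ j)^2 * (zQ $ i $ j - Q0 $ i $ j)^2)
       + sig^2 * (zS $ i - S0 $ i)^2))"
  have Npos: "N > 0" by (simp add: N_def)
  have hlb: "lb i \<le> h i" for i
  proof -
    note F = foc[OF sig cpos gpos nupos rho, where i=i]
    have "h i = (zQ $ i $ i - Q0 $ i $ i)^2 / (2 * c $ i)
      + gam $ i / 2 * (\<Sum>j\<in>UNIV. (nu $ j)^2 * (zQ $ i $ j - Q0 $ i $ j)^2)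
      + gam $ i * sig^2 / 2 * (zS $ i - S0 $ i)^2
      + gam $ i * sig / sqrt (real CARD('n)) * (zS $ i - S0 $ i) * (\<Sum>j\<in>UNIV. rho $ j * nu $ j * (zQ $ i $ j - Q0 $ i $ j))"
      unfolding h_def Q0_def S0_def
      by (rule row_ident[OF cpos gpos F])
    moreover have "lb i \<le> (zQ $ i $ i - Q0 $ i $ i)^2 / (2 * c $ i)
      + gam $ i / 2 * (\<Sum>j\<in>UNIV. (nu $ j)^2 * (zQ $ i $ j - Q0 $ i $ j)^2)
      + gam $ i * sig^2 / 2 * (zS $ i - S0 $ i)^2
      + gam $ i * sig / sqrt (real CARD('n)) * (zS $ i - S0 $ i) * (\<Sum>j\<in>UNIV. rho $ j * nu $ j * (zQ $ i $ j - Q0 $ i $ j))"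
      unfolding lb_def
      by (rule quad_lb[where d = "\<lambda>j. zQ $ i $ j - Q0 $ i $ j", OF cpos gpos eps])
    ultimately show ?thesis by simp
  qed
  have lb0: "0 \<le> lb i" for i
    unfolding lb_def using gpos[of i] epos by (intro mult_nonneg_nonneg add_nonneg_nonneg sum_nonneg) auto
  have "obj_f c gam nu rho sig gP Q0 S0 \<le> obj_f c gam nu rho sig gP zQ zS"
    using mx unfolding is_global_max_def by blast
  then have "- (1 / N) * (\<Sum>i\<in>UNIV. hrow c gam nu rho sig i (Q0 $ i) (S0 $ i)) - gP / (2 * N^2) * pen nu rho sig Q0 S0
      \<le> - (1 / N) * (\<Sum>i\<in>UNIV. hrow c gam nu rho sig i (zQ $ i) (zS $ i)) - gP / (2 * N^2) * pen nu rho sig zQ zS"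
    unfolding obj_split N_def .
  moreover have "pen nu rho sig zQ zS \<ge> 0" by (rule pen_nonneg[OF rho])
  then have "gP / (2 * N^2) * pen nu rho sig zQ zS \<ge> 0" using gP Npos by simp
  ultimately have "(1 / N) * (\<Sum>i\<in>UNIV. h i) \<le> gP / (2 * N^2) * pen nu rho sig Q0 S0"
    unfolding h_def sum_subtractf by (simp add: algebra_simps)
  then have Hb: "(\<Sum>i\<in>UNIV. h i) \<le> gP * pen nu rho sig Q0 S0 / (2 * N)"
    using Npos by (simp add: field_simps power2_eq_square)
  have "lb i \<le> (\<Sum>i\<in>UNIV. lb i)" by (rule member_le_sum) (auto intro: lb0)
  also have "\<dots> \<le> (\<Sum>i\<in>UNIV. h i)" by (rule sum_mono) (rule hlb)
  finally have L: "lb i \<le> gP * pen nu rho sig Q0 S0 / (2 * N)" using Hb by linarith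
  have "(nu $ j)^2 * (zQ $ i $ j - Q0 $ i $ j)^2 \<le> (\<Sum>j\<in>UNIV. (nu $ j)^2 * (zQ $ i $ j - Q0 $ i $ j)^2)"
    by (rule member_le_sum) auto
  then have "gam $ i * eps / 2 * ((nu $ j)^2 * (zQ $ i $ j - Q0 $ i $ j)^2) \<le> lb i"
    unfolding lb_def using gpos[of i] epos
    by (intro mult_left_mono) (auto intro: add_increasing2)
  then show "gam $ i * eps / 2 * ((nu $ j)^2 * (zQ $ i $ j - zQ0 c gam nu rho $ i $ j)^2)
           \<le> gP * pen nu rho sig (zQ0 c gam nu rho) (zS0 c gam nu rho sig) / (2 * real CARD('n))"
    using L unfolding Q0_def S0_def N_def by linarith
  have "0 \<le> (\<Sum>j\<in>UNIV. (nu $ j)^2 * (zQ $ i $ j - Q0 $ i $ j)^2)" by (rule sum_nonneg) auto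
  then have "gam $ i * eps / 2 * (sig^2 * (zS $ i - S0 $ i)^2) \<le> lb i"
    unfolding lb_def using gpos[of i] epos
    by (intro mult_left_mono) auto
  then show "gam $ i * eps / 2 * (sig^2 * (zS $ i - zS0 c gam nu rho sig $ i)^2)
           \<le> gP * pen nu rho sig (zQ0 c gam nu rho) (zS0 c gam nu rho sig) / (2 * real CARD('n))"
    using L unfolding Q0_def S0_def N_def by linarith
qed

theorem mainTheorem13:
  fixes c gam nu rho :: "real^'n" and sig :: real
  assumes "sig > 0"
    and "\<And>i. c $ i > 0" and "\<And>i. gam $ i > 0" and "\<And>i. nu $ i > 0"
    and "\<And>i. -1 < rho $ i \<and> rho $ i < 1"
  shows "\<exists>gbar > 0. \<forall>gP. 0 < gP \<and> gP < gbar \<longrightarrow>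
           (\<forall>zQ zS. is_global_max c gam nu rho sig gP zQ zS \<longrightarrow>
              (\<forall>i. zQ $ i $ i > 0)
            \<and> (\<forall>i. rho $ i \<noteq> 0 \<longrightarrow> sgn (zS $ i) = - sgn (rho $ i))
            \<and> (\<forall>i j. i \<noteq> j \<and> rho $ i * rho $ j \<noteq> 0 \<longrightarrow>
                   sgn (zQ $ i $ j) = sgn (rho $ i * rho $ j)))"
proof -
  note sig = assms(1) and cpos = assms(2) and gpos = assms(3) and nupos = assms(4) and rho = assms(5)
  define Q0 where "Q0 = zQ0 c gam nu rho"
  define S0 where "S0 = zS0 c gam nu rho sig"
  define N where "N = real CARD('n)"
  define eps where "eps = 1 - Max (range (\<lambda>j. \<bar>rho $ j\<bar>))"
  have Npos: "N > 0" by (simp add: N_def)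
  have epsb: "\<bar>rho $ j\<bar> \<le> 1 - eps" for j unfolding eps_def by (simp add: Max_ge)
  have epos: "eps > 0"
  proof -
    have "Max (range (\<lambda>j. \<bar>rho $ j\<bar>)) \<in> range (\<lambda>j. \<bar>rho $ j\<bar>)" by (rule Max_in) auto
    then obtain j where "Max (range (\<lambda>j. \<bar>rho $ j\<bar>)) = \<bar>rho $ j\<bar>" by (metis (no_types, lifting) imageE)
    then show ?thesis using rho[of j] unfolding eps_def by auto
  qed
  define P0 where "P0 = pen nu rho sig Q0 S0"
  have P0nn: "P0 \<ge> 0" unfolding P0_def by (rule pen_nonneg[OF rho])
  define Kq where "Kq = (\<lambda>i j. P0 / (N * gam $ i * eps * (nu $ j)^2))"
  define Ks where "Ks = (\<lambda>i. P0 / (N * gam $ i * eps * sig^2))"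
  have Kq0: "Kq i j \<ge> 0" for i j unfolding Kq_def using P0nn Npos gpos[of i] epos by simp
  have Ks0: "Ks i \<ge> 0" for i unfolding Ks_def using P0nn Npos gpos[of i] epos by simp
  have devQ: "(zQ $ i $ j - Q0 $ i $ j)^2 \<le> gP * Kq i j"
    if "gP > 0" "is_global_max c gam nu rho sig gP zQ zS" for gP zQ zS i j
  proof -
    have "gam $ i * eps / 2 * ((nu $ j)^2 * (zQ $ i $ j - Q0 $ i $ j)^2) \<le> gP * P0 / (2 * N)"
      using devbound(1)[OF sig cpos gpos nupos rho epsb epos that, of i j]
      unfolding Q0_def S0_def P0_def N_def .
    moreover have "gam $ i * eps * (nu $ j)^2 > 0" using gpos[of i] epos nupos[of j] by simp
    ultimately show ?thesis unfolding Kq_def using Npos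
      by (simp add: field_simps)
  qed
  have devS: "(zS $ i - S0 $ i)^2 \<le> gP * Ks i"
    if "gP > 0" "is_global_max c gam nu rho sig gP zQ zS" for gP zQ zS i
  proof -
    have "gam $ i * eps / 2 * (sig^2 * (zS $ i - S0 $ i)^2) \<le> gP * P0 / (2 * N)"
      using devbound(2)[OF sig cpos gpos nupos rho epsb epos that, of i]
      unfolding Q0_def S0_def P0_def N_def .
    moreover have "gam $ i * eps * sig^2 > 0" using gpos[of i] epos sig by simp
    ultimately show ?thesis unfolding Ks_def using Npos
      by (simp add: field_simps)
  qed
  define G where "G = (\<lambda>p::'n \<times> 'n. min
      (if Q0 $ fst p $ snd p \<noteq> 0 then (Q0 $ fst p $ snd p)^2 / (Kq (fst p) (snd p) + 1) else 1)
      (if S0 $ fst p \<noteq> 0 then (S0 $ fst p)^2 / (Ks (fst p) + 1) else 1))"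
  have Gpos: "G p > 0" for p
    unfolding G_def using Kq0[of "fst p" "snd p"] Ks0[of "fst p"] by auto
  define gbar where "gbar = Min (range G)"
  have gbar_pos: "gbar > 0"
  proof -
    have "gbar \<in> range G" unfolding gbar_def by (rule Min_in) auto
    then show ?thesis using Gpos by auto
  qed
  have gbar_le: "gbar \<le> G p" for p unfolding gbar_def by (rule Min_le) auto
  have closeQ: "sgn (zQ $ i $ j) = sgn (Q0 $ i $ j)"
    if "0 < gP" "gP < gbar" "is_global_max c gam nu rho sig gP zQ zS" "Q0 $ i $ j \<noteq> 0" for gP zQ zS i j
  proof (rule sgn_close)
    have "gP < G (i, j)" using gbar_le[of "(i,j)"] that(2) by linarith
    then have "gP < (Q0 $ i $ j)^2 / (Kq i j + 1)" unfolding G_def using that(4) by simp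
    then have "gP * (Kq i j + 1) < (Q0 $ i $ j)^2" using Kq0[of i j] by (simp add: field_simps)
    moreover have "gP * Kq i j \<le> gP * (Kq i j + 1)" using that(1) by simp
    ultimately show "(zQ $ i $ j - Q0 $ i $ j)^2 < (Q0 $ i $ j)^2"
      using devQ[OF that(1,3), of i j] by linarith
  qed
  have closeS: "sgn (zS $ i) = sgn (S0 $ i)"
    if "0 < gP" "gP < gbar" "is_global_max c gam nu rho sig gP zQ zS" "S0 $ i \<noteq> 0" for gP zQ zS i
  proof (rule sgn_close)
    have "gP < G (i, i)" using gbar_le[of "(i,i)"] that(2) by linarith
    then have "gP < (S0 $ i)^2 / (Ks i + 1)" unfolding G_def using that(4) by simp
    then have "gP * (Ks i + 1) < (S0 $ i)^2" using Ks0[of i] by (simp add: field_simps)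
    moreover have "gP * Ks i \<le> gP * (Ks i + 1)" using that(1) by simp
    ultimately show "(zS $ i - S0 $ i)^2 < (S0 $ i)^2"
      using devS[OF that(1,3), of i] by linarith
  qed
  have qp: "qq c gam nu rho i > 0" for i by (rule qq_pos[OF rho cpos gpos])
  have Mp: "MM rho i > 0" for i by (rule MM_pos[OF rho])
  have Qii: "Q0 $ i $ i = qq c gam nu rho i" for i by (simp add: Q0_def zQ0_def)
  have Qij: "Q0 $ i $ j = rho $ i * rho $ j * nu $ i * qq c gam nu rho i / (MM rho i * nu $ j)"
    if "i \<noteq> j" for i j using that by (simp add: Q0_def zQ0_def)
  have Si: "S0 $ i = - rho $ i * nu $ i * qq c gam nu rho i * sqrt (real CARD('n)) / (sig * MM rho i)" for i
    by (simp add: S0_def zS0_def)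
  have sQij: "sgn (Q0 $ i $ j) = sgn (rho $ i * rho $ j)" if "i \<noteq> j" for i j
    unfolding Qij[OF that] using qp[of i] Mp[of i] nupos[of i] nupos[of j]
    by (simp add: sgn_mult sgn_divide)
  have sSi: "sgn (S0 $ i) = - sgn (rho $ i)" for i
    unfolding Si using qp[of i] Mp[of i] nupos[of i] sig
    by (simp add: sgn_mult sgn_divide sgn_minus)
  show ?thesis
  proof (intro exI[of _ gbar] conjI allI impI gbar_pos)
    fix gP zQ zS i j
    assume g: "0 < gP \<and> gP < gbar" and mx: "is_global_max c gam nu rho sig gP zQ zS"
    show "zQ $ i $ i > 0"
    proof -
      have "sgn (zQ $ i $ i) = sgn (Q0 $ i $ i)"
        using closeQ[of gP zQ zS i i] g mx qp[of i] Qii[of i] by simp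
      then show ?thesis using qp[of i] Qii[of i] by (simp add: sgn_1_pos)
    qed
  next
    fix gP zQ zS i
    assume g: "0 < gP \<and> gP < gbar" and mx: "is_global_max c gam nu rho sig gP zQ zS"
      and r: "rho $ i \<noteq> 0"
    have "S0 $ i \<noteq> 0" using sSi[of i] r by (auto simp: sgn_0_0)
    then show "sgn (zS $ i) = - sgn (rho $ i)" using closeS[of gP zQ zS i] g mx sSi[of i] by simp
  next
    fix gP zQ zS i j
    assume g: "0 < gP \<and> gP < gbar" and mx: "is_global_max c gam nu rho sig gP zQ zS"
      and r: "i \<noteq> j \<and> rho $ i * rho $ j \<noteq> 0"
    have "Q0 $ i $ j \<noteq> 0" using sQij[of i j] r by (auto simp: sgn_0_0)
    then show "sgn (zQ $ i $ j) = sgn (rho $ i * rho $ j)" using closeQ[of gP zQ zS i j] g mx sQij[of i j] r by simp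
  qed
qed
end
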